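(* Let $C$ be a nonempty closed convex subset of a real Hilbert space $H$, and let $A,F:H\to H$ be Lipschitz continuous with constants $L_A,L_F$, respectively. Assume that $A$ is $\lambda$-strongly monotone for some $\lambda>0$ and that the couple $(A,F)$ is $\gamma$-strongly monotone on $H$ for some $\gamma>0$. Then $\mathrm{GVI}(A,F,C)$ admits a unique solution in $H$.
   Context: $\mathrm{GVI}(A,F,C)$: find $x^*\in H$ with $Fx^*\in C$ and $\langle Ax^*,y-Fx^*\rangle\ge0$ for all $y\in C$. $A$ is $\lambda$-strongly monotone if $\langle Ax-Ay,x-y\rangle\ge\lambda\|x-y\|^2$ for all $x,y$. The couple $(A,F)$ is $\gamma$-strongly monotone if $\langle Ax-Ay,Fx-Fy\rangle\ge\gamma\|x-y\|^2$ for all $x,y\in H$. *)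

theory Defs
  imports "HOL-Analysis.Analysis"
begin

definition strongly_monotone :: "real \<Rightarrow> ('a::real_inner \<Rightarrow> 'a) \<Rightarrow> bool" where
  "strongly_monotone lam A \<longleftrightarrow>
     (\<forall>x y. inner (A x - A y) (x - y) \<ge> lam * (norm (x - y))\<^sup>2)"

definition couple_strongly_monotone ::
    "real \<Rightarrow> ('a::real_inner \<Rightarrow> 'a) \<Rightarrow> ('a \<Rightarrow> 'a) \<Rightarrow> bool" where
  "couple_strongly_monotone gam A F \<longleftrightarrow>
     (\<forall>x y. inner (A x - A y) (F x - F y) \<ge> gam * (norm (x - y))\<^sup>2)"

definition GVI_solution ::
    "('a::real_inner \<Rightarrow> 'a) \<Rightarrow> ('a \<Rightarrow> 'a) \<Rightarrow> 'a set \<Rightarrow> 'a \<Rightarrow> bool" where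
  "GVI_solution A F C x \<longleftrightarrow> F x \<in> C \<and> (\<forall>y\<in>C. inner (A x) (y - F x) \<ge> 0)"

end

theory Submission imports Defs begin
lemma near_point:
  fixes a :: "'a::metric_space"
  assumes "C \<noteq> {}" "e > 0"
  shows "\<exists>x\<in>C. dist a x < infdist a C + e"
proof (rule ccontr)
  assume "\<not> ?thesis"
  hence "\<forall>x\<in>C. infdist a C + e \<le> dist a x" by (auto simp: not_less)
  hence "infdist a C + e \<le> infdist a C"
    unfolding infdist_notempty[OF assms(1)] using assms(1) by (intro cINF_greatest) auto
  thus False using assms(2) by simp
qed

lemma proj_exists:
  fixes a :: "'a::{real_inner,complete_space}"
  assumes C: "C \<noteq> {}" "closed C" "convex C"
  shows "\<exists>p\<in>C. \<forall>y\<in>C. dist a p \<le> dist a y"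
proof -
  define d where "d = infdist a C"
  have d0: "d \<ge> 0" unfolding d_def by (rule infdist_nonneg)
  have "\<forall>n::nat. \<exists>x\<in>C. dist a x < d + 1/(Suc n)"
    using near_point[OF C(1)] unfolding d_def by simp
  then obtain X where X: "\<And>n. X n \<in> C" "\<And>n. dist a (X n) < d + 1/(Suc n)"
    by metis
  have lowd: "\<And>y. y \<in> C \<Longrightarrow> d \<le> dist a y" unfolding d_def by (rule infdist_le)
  have key: "(norm (X n - X m))\<^sup>2 \<le> 4 * e * (2*d + e)"
    if "e > 0" "1/(Suc n) \<le> e" "1/(Suc m) \<le> e" for n m e
  proof -
    define u where "u = a - X n"
    define v where "v = a - X m"
    have mid: "(1/2) *\<^sub>R X n + (1/2) *\<^sub>R X m \<in> C"
      using convexD[OF C(3) X(1) X(1), of "1/2" "1/2"] by simp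
    have "d \<le> norm (a - ((1/2) *\<^sub>R X n + (1/2) *\<^sub>R X m))"
      using lowd[OF mid] by (simp add: dist_norm)
    also have "a - ((1/2) *\<^sub>R X n + (1/2) *\<^sub>R X m) = (1/2) *\<^sub>R (u + v)"
      unfolding u_def v_def
      by (simp add: algebra_simps) (metis field_sum_of_halves scaleR_add_left scaleR_one)
    finally have h1: "2 * d \<le> norm (u + v)" by simp
    have h1': "4 * d\<^sup>2 \<le> (norm (u+v))\<^sup>2"
    proof -
      have "(2*d)\<^sup>2 \<le> (norm (u+v))\<^sup>2" using h1 d0 by (intro power_mono) auto
      thus ?thesis by (simp add: power2_eq_square)
    qed
    have nu: "norm u \<le> d + e" using X(2)[of n] that unfolding u_def dist_norm by linarith
    have nv: "norm v \<le> d + e" using X(2)[of m] that unfolding v_def dist_norm by linarith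
    have nu2: "(norm u)\<^sup>2 \<le> (d+e)\<^sup>2" using nu by (intro power_mono) auto
    have nv2: "(norm v)\<^sup>2 \<le> (d+e)\<^sup>2" using nv by (intro power_mono) auto
    have par: "(norm (u - v))\<^sup>2 = 2*(norm u)\<^sup>2 + 2*(norm v)\<^sup>2 - (norm (u+v))\<^sup>2"
      by (simp add: power2_norm_eq_inner inner_diff inner_add inner_commute)
    have "X n - X m = -(u - v)" unfolding u_def v_def by simp
    hence "(norm (X n - X m))\<^sup>2 = (norm (u - v))\<^sup>2" by (simp only: norm_minus_cancel)
    also have "\<dots> \<le> 4*(d+e)\<^sup>2 - 4*d\<^sup>2" using par nu2 nv2 h1' by linarith
    also have "\<dots> = 4 * e * (2*d + e)" by (simp add: power2_eq_square algebra_simps)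
    finally show ?thesis .
  qed
  have "Cauchy X"
  proof (rule metric_CauchyI)
    fix r :: real assume r: "r > 0"
    define e where "e = min 1 (r\<^sup>2 / (8 * (2*d + 1)))"
    have e0: "e > 0" unfolding e_def using r d0 by auto
    have e1: "e \<le> 1" unfolding e_def by simp
    obtain N :: nat where N: "1 / Suc N < e" using reals_Archimedean[OF e0] by (auto simp: inverse_eq_divide)
    have small: "4 * e * (2*d + e) < r\<^sup>2"
    proof -
      have "4 * e * (2*d + e) \<le> 4 * e * (2*d+1)" using e0 e1 by (intro mult_left_mono) auto
      also have "\<dots> \<le> r\<^sup>2 / 2"
      proof -
        have "e \<le> r\<^sup>2 / (8 * (2*d + 1))" unfolding e_def by simp
        hence "e * (8 * (2*d+1)) \<le> r\<^sup>2" using d0 by (simp add: pos_le_divide_eq)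
        thus ?thesis by (simp add: algebra_simps)
      qed
      finally have "4 * e * (2*d + e) \<le> r\<^sup>2 / 2" .
      moreover have "r\<^sup>2 > 0" using r by simp
      ultimately show ?thesis by linarith
    qed
    show "\<exists>M. \<forall>m\<ge>M. \<forall>n\<ge>M. dist (X m) (X n) < r"
    proof (intro exI allI impI)
      fix m n assume "m \<ge> N" "n \<ge> N"
      have "1 / Suc m \<le> 1 / Suc N" "1 / Suc n \<le> 1 / Suc N"
        using \<open>m \<ge> N\<close> \<open>n \<ge> N\<close> by (auto intro!: divide_left_mono)
      hence "(norm (X m - X n))\<^sup>2 \<le> 4 * e * (2*d + e)"
        using key[OF e0, of m n] N by linarith
      hence "(norm (X m - X n))\<^sup>2 < r\<^sup>2" using small by linarith
      thus "dist (X m) (X n) < r" using r by (simp add: dist_norm power_less_imp_less_base)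
    qed
  qed
  then obtain p where p: "X \<longlonglongrightarrow> p" using Cauchy_convergent_iff convergent_def by blast
  have pC: "p \<in> C" using closed_sequentially[OF C(2)] X(1) p by blast
  have "dist a p \<le> d"
  proof (rule field_le_epsilon)
    fix e :: real assume e: "e > 0"
    obtain N where N: "\<forall>n\<ge>N. dist (X n) p < e/2" using p e
      by (metis LIMSEQ_iff_nz dist_norm half_gt_zero lim_sequentially)
    obtain n where n: "n \<ge> N" "1 / Suc n < e/2"
    proof -
      obtain M :: nat where M: "1 / Suc M < e/2" using reals_Archimedean[of "e/2"] e by (auto simp: inverse_eq_divide)
      have "1 / Suc (max M N) \<le> 1 / Suc M" by (auto intro!: divide_left_mono)
      thus ?thesis using that[of "max M N"] M by simp
    qed
    have "dist a p \<le> dist a (X n) + dist (X n) p" by (rule dist_triangle)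
    thus "dist a p \<le> d + e" using X(2)[of n] N n by force
  qed
  thus ?thesis using pC lowd by force
qed

definition proj :: "'a::real_inner set \<Rightarrow> 'a \<Rightarrow> 'a" where
  "proj C a = (SOME p. p \<in> C \<and> (\<forall>y\<in>C. dist a p \<le> dist a y))"

lemma proj_props:
  fixes a :: "'a::{real_inner,complete_space}"
  assumes C: "C \<noteq> {}" "closed C" "convex C"
  shows "proj C a \<in> C" "\<And>y. y \<in> C \<Longrightarrow> inner (a - proj C a) (y - proj C a) \<le> 0"
proof -
  obtain p where "p \<in> C \<and> (\<forall>y\<in>C. dist a p \<le> dist a y)" using proj_exists[OF C, of a] by blast
  hence "proj C a \<in> C \<and> (\<forall>y\<in>C. dist a (proj C a) \<le> dist a y)"
    unfolding proj_def by (rule someI)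
  thus "proj C a \<in> C" "\<And>y. y \<in> C \<Longrightarrow> inner (a - proj C a) (y - proj C a) \<le> 0"
    using any_closest_point_dot[OF C(3,2)] by auto
qed

lemma inner_aux:
  fixes a b p q :: "'a::real_inner"
  shows "inner (a - p) (q - p) + inner (b - q) (p - q) = inner (p - q) (p - q) - inner (a - b) (p - q)"
  by (simp add: inner_diff_left inner_diff_right inner_commute algebra_simps)

lemma proj_nonexp:
  fixes a b :: "'a::{real_inner,complete_space}"
  assumes C: "C \<noteq> {}" "closed C" "convex C"
  shows "norm (proj C a - proj C b) \<le> norm (a - b)"
proof -
  let ?p = "proj C a" and ?q = "proj C b"
  have 1: "inner (a - ?p) (?q - ?p) \<le> 0" using proj_props[OF C] by blast
  have 2: "inner (b - ?q) (?p - ?q) \<le> 0" using proj_props[OF C] by blast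
  have "(norm (?p - ?q))\<^sup>2 \<le> inner (a - b) (?p - ?q)"
    using 1 2 inner_aux[of a ?p ?q b] unfolding power2_norm_eq_inner by linarith
  also have "\<dots> \<le> norm (a - b) * norm (?p - ?q)" by (rule norm_cauchy_schwarz)
  finally have "norm (?p - ?q) * norm (?p - ?q) \<le> norm (a - b) * norm (?p - ?q)"
    by (simp add: power2_eq_square)
  thus ?thesis
    by (cases "norm (?p - ?q) = 0") (auto simp: mult_le_cancel_right)
qed

lemma sm_contraction:
  fixes B :: "'a::real_inner \<Rightarrow> 'a"
  assumes c: "c > 0" and sm: "\<And>x y. inner (B x - B y) (x - y) \<ge> c * (norm (x - y))\<^sup>2"
    and lip: "\<And>x y. norm (B x - B y) \<le> L * norm (x - y)"
  shows "\<exists>k \<mu>. 0 \<le> k \<and> k < 1 \<and> \<mu> > 0 \<and>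
     (\<forall>x y. norm ((x - \<mu> *\<^sub>R B x) - (y - \<mu> *\<^sub>R B y)) \<le> k * norm (x - y))"
proof -
  define M where "M = max L c"
  have M0: "M > 0" "M \<ge> c" "M \<ge> L" using c unfolding M_def by auto
  define \<mu> where "\<mu> = c / M\<^sup>2"
  have mu0: "\<mu> > 0" unfolding \<mu>_def using M0 c by simp
  define k where "k = sqrt (1 - c\<^sup>2 / M\<^sup>2)"
  have cM: "c\<^sup>2 \<le> M\<^sup>2" using power_mono[of c M 2] c M0 by simp
  have ratio: "c\<^sup>2 / M\<^sup>2 \<le> 1" "c\<^sup>2 / M\<^sup>2 > 0" using cM c M0 by simp_all
  have k0: "0 \<le> k" "k < 1" unfolding k_def using ratio by (auto simp: real_sqrt_lt_1_iff)
  have est: "norm ((x - \<mu> *\<^sub>R B x) - (y - \<mu> *\<^sub>R B y)) \<le> k * norm (x - y)" for x y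
  proof -
    define d where "d = x - y"
    define e where "e = B x - B y"
    have eq: "(x - \<mu> *\<^sub>R B x) - (y - \<mu> *\<^sub>R B y) = d - \<mu> *\<^sub>R e"
      unfolding d_def e_def by (simp add: algebra_simps)
    have sm': "inner e d \<ge> c * (norm d)\<^sup>2" using sm unfolding d_def e_def .
    have "L * norm d \<le> M * norm d" using M0(3) by (rule mult_right_mono) simp
    hence le: "norm e \<le> M * norm d" using lip[of x y] unfolding d_def e_def by linarith
    have le2: "(norm e)\<^sup>2 \<le> M\<^sup>2 * (norm d)\<^sup>2"
      using power_mono[OF le norm_ge_zero, of 2] by (simp add: power_mult_distrib)
    have ex: "inner (d - \<mu> *\<^sub>R e) (d - \<mu> *\<^sub>R e) = inner d d - 2*\<mu>*inner e d + \<mu>\<^sup>2 * inner e e"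
      by (simp add: inner_diff_left inner_diff_right inner_commute[of d e] power2_eq_square algebra_simps)
    have "(norm (d - \<mu> *\<^sub>R e))\<^sup>2 = (norm d)\<^sup>2 - 2 * \<mu> * inner e d + \<mu>\<^sup>2 * (norm e)\<^sup>2"
      unfolding power2_norm_eq_inner ex ..
    also have "\<dots> \<le> (norm d)\<^sup>2 - 2 * \<mu> * (c * (norm d)\<^sup>2) + \<mu>\<^sup>2 * (M\<^sup>2 * (norm d)\<^sup>2)"
    proof -
      have "2 * \<mu> * (c * (norm d)\<^sup>2) \<le> 2 * \<mu> * inner e d" using sm' mu0 by simp
      moreover have "\<mu>\<^sup>2 * (norm e)\<^sup>2 \<le> \<mu>\<^sup>2 * (M\<^sup>2 * (norm d)\<^sup>2)"
        using le2 by (rule mult_left_mono) simp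
      ultimately show ?thesis by linarith
    qed
    also have "\<dots> = (1 - c\<^sup>2 / M\<^sup>2) * (norm d)\<^sup>2"
      unfolding \<mu>_def using M0 by (simp add: field_simps power2_eq_square)
    also have "\<dots> = (k * norm d)\<^sup>2"
      unfolding k_def using ratio by (simp add: power_mult_distrib)
    finally have "(norm (d - \<mu> *\<^sub>R e))\<^sup>2 \<le> (k * norm d)\<^sup>2" .
    hence "norm (d - \<mu> *\<^sub>R e) \<le> k * norm d"
      by (rule power2_le_imp_le) (use k0 in simp_all)
    thus ?thesis unfolding eq d_def .
  qed
  show ?thesis using k0 mu0 est by blast
qed

lemma sm_surj:
  fixes B :: "'a::{real_inner,complete_space} \<Rightarrow> 'a"
  assumes c: "c > 0" and sm: "\<And>x y. inner (B x - B y) (x - y) \<ge> c * (norm (x - y))\<^sup>2"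
    and lip: "\<And>x y. norm (B x - B y) \<le> L * norm (x - y)"
  shows "surj B"
proof -
  obtain k \<mu> where k: "0 \<le> k" "k < 1" "\<mu> > 0"
    and est: "\<And>x y. norm ((x - \<mu> *\<^sub>R B x) - (y - \<mu> *\<^sub>R B y)) \<le> k * norm (x - y)"
    using sm_contraction[OF c sm lip] by blast
  have "\<exists>x. B x = t" for t
  proof -
    let ?f = "\<lambda>x. x - \<mu> *\<^sub>R (B x - t)"
    have "\<forall>x y. dist (?f x) (?f y) \<le> k * dist x y"
    proof (intro allI)
      fix x y
      have eq: "?f x - ?f y = (x - \<mu> *\<^sub>R B x) - (y - \<mu> *\<^sub>R B y)" by (simp add: algebra_simps)
      show "dist (?f x) (?f y) \<le> k * dist x y" unfolding dist_norm eq using est[of x y] .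
    qed
    hence "\<exists>!x. ?f x = x" by (rule banach_fix_type[OF k(1,2)])
    then obtain x where "?f x = x" by (elim ex1E)
    hence "x = x + \<mu> *\<^sub>R (B x - t)" by (simp only: diff_eq_eq)
    hence "\<mu> *\<^sub>R (B x - t) = 0" by (metis add_cancel_left_right)
    hence "B x - t = 0" using k(3) by simp
    thus ?thesis by (intro exI[of _ x]) simp
  qed
  thus ?thesis by (metis surjI)
qed

lemma sm_inj:
  fixes B :: "'a::real_inner \<Rightarrow> 'a"
  assumes c: "c > 0" and sm: "\<And>x y. inner (B x - B y) (x - y) \<ge> c * (norm (x - y))\<^sup>2"
  shows "inj B"
proof (rule injI)
  fix x y assume "B x = B y"
  hence "c * (norm (x - y))\<^sup>2 \<le> 0" using sm[of x y] by simp
  thus "x = y" using c by (simp add: mult_le_0_iff)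
qed

lemma vi_exists:
  fixes B :: "'a::{real_inner,complete_space} \<Rightarrow> 'a"
  assumes C: "C \<noteq> {}" "closed C" "convex C"
    and c: "c > 0" and sm: "\<And>x y. inner (B x - B y) (x - y) \<ge> c * (norm (x - y))\<^sup>2"
    and lip: "\<And>x y. norm (B x - B y) \<le> L * norm (x - y)"
  shows "\<exists>z\<in>C. \<forall>y\<in>C. inner (B z) (y - z) \<ge> 0"
proof -
  obtain k \<mu> where k: "0 \<le> k" "k < 1" "\<mu> > 0"
    and est: "\<And>x y. norm ((x - \<mu> *\<^sub>R B x) - (y - \<mu> *\<^sub>R B y)) \<le> k * norm (x - y)"
    using sm_contraction[OF c sm lip] by blast
  let ?f = "\<lambda>x. proj C (x - \<mu> *\<^sub>R B x)"
  have "\<forall>x y. dist (?f x) (?f y) \<le> k * dist x y"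
  proof (intro allI)
    fix x y
    have "norm (?f x - ?f y) \<le> norm ((x - \<mu> *\<^sub>R B x) - (y - \<mu> *\<^sub>R B y))"
      by (rule proj_nonexp[OF C])
    also have "\<dots> \<le> k * norm (x - y)" by (rule est)
    finally show "dist (?f x) (?f y) \<le> k * dist x y" by (simp add: dist_norm)
  qed
  hence "\<exists>!x. ?f x = x" by (rule banach_fix_type[OF k(1,2)])
  then obtain z where z: "?f z = z" by (elim ex1E)
  have zC: "z \<in> C" using proj_props(1)[OF C, of "z - \<mu> *\<^sub>R B z"] z by simp
  have "\<forall>y\<in>C. inner (B z) (y - z) \<ge> 0"
  proof
    fix y assume y: "y \<in> C"
    have "inner ((z - \<mu> *\<^sub>R B z) - z) (y - z) \<le> 0"
      using proj_props(2)[OF C y, of "z - \<mu> *\<^sub>R B z"] z by simp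
    hence "\<mu> * inner (B z) (y - z) \<ge> 0" by simp
    thus "inner (B z) (y - z) \<ge> 0" using k(3) by (simp add: zero_le_mult_iff)
  qed
  thus ?thesis using zC by blast
qed


lemma sm_lower:
  fixes B :: "'a::real_inner \<Rightarrow> 'a"
  assumes c: "c > 0" and sm: "\<And>x y. inner (B x - B y) (x - y) \<ge> c * (norm (x - y))\<^sup>2"
  shows "c * norm (x - y) \<le> norm (B x - B y)"
proof (cases "x = y")
  case True thus ?thesis by simp
next
  case False
  hence n: "norm (x - y) > 0" by simp
  have "c * norm (x - y) * norm (x - y) \<le> norm (B x - B y) * norm (x - y)"
    using sm[of x y] norm_cauchy_schwarz[of "B x - B y" "x - y"]
    by (simp add: power2_eq_square mult.assoc)
  thus ?thesis using n by simp
qed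

lemma sq_bound:
  fixes z w :: "'a::real_normed_vector"
  assumes "norm z \<le> K * norm w" "K > 0" "c \<ge> 0"
  shows "c / K\<^sup>2 * (norm z)\<^sup>2 \<le> c * (norm w)\<^sup>2"
proof -
  have "(norm z)\<^sup>2 \<le> (K * norm w)\<^sup>2" using assms(1) by (intro power_mono) auto
  hence "(norm z)\<^sup>2 \<le> K\<^sup>2 * (norm w)\<^sup>2" by (simp add: power_mult_distrib)
  hence "(norm z)\<^sup>2 / K\<^sup>2 \<le> (norm w)\<^sup>2" using assms(2) by (simp add: divide_le_eq mult.commute)
  hence "c * ((norm z)\<^sup>2 / K\<^sup>2) \<le> c * (norm w)\<^sup>2" using assms(3) by (rule mult_left_mono)
  thus ?thesis by simp
qed

lemma inv_props:
  fixes B :: "'a::{real_inner,complete_space} \<Rightarrow> 'a"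
  assumes c: "c > 0" and sm: "\<And>x y. inner (B x - B y) (x - y) \<ge> c * (norm (x - y))\<^sup>2"
    and lip: "\<And>x y. norm (B x - B y) \<le> L * norm (x - y)" and L: "L \<ge> 0"
  shows "\<And>z. B (inv B z) = z" "\<And>x. inv B (B x) = x"
    "\<And>z1 z2. inner (inv B z1 - inv B z2) (z1 - z2) \<ge> (c / (L+1)\<^sup>2) * (norm (z1 - z2))\<^sup>2"
    "\<And>z1 z2. norm (inv B z1 - inv B z2) \<le> (1/c) * norm (z1 - z2)"
proof -
  have su: "surj B" by (rule sm_surj[OF c sm lip])
  have ij: "inj B" by (rule sm_inj[OF c sm])
  show BB: "\<And>z. B (inv B z) = z" using su by (simp add: surj_f_inv_f)
  show "\<And>x. inv B (B x) = x" using ij by simp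
  fix z1 z2
  define w1 where "w1 = inv B z1"
  define w2 where "w2 = inv B z2"
  have z1: "z1 = B w1" and z2: "z2 = B w2" unfolding w1_def w2_def using BB by auto
  have "norm (z1 - z2) \<le> L * norm (w1 - w2)" unfolding z1 z2 by (rule lip)
  also have "\<dots> \<le> (L+1) * norm (w1 - w2)" by (simp add: distrib_right)
  finally have "c / (L+1)\<^sup>2 * (norm (z1 - z2))\<^sup>2 \<le> c * (norm (w1 - w2))\<^sup>2"
    using L c by (intro sq_bound) auto
  also have "\<dots> \<le> inner (B w1 - B w2) (w1 - w2)" by (rule sm)
  also have "\<dots> = inner (w1 - w2) (z1 - z2)" unfolding z1 z2 by (simp add: inner_commute)
  finally show "inner (inv B z1 - inv B z2) (z1 - z2) \<ge> (c / (L+1)\<^sup>2) * (norm (z1 - z2))\<^sup>2"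
    unfolding w1_def w2_def .
  have "c * norm (w1 - w2) \<le> norm (z1 - z2)" unfolding z1 z2 by (rule sm_lower[OF c sm])
  hence "norm (w1 - w2) \<le> norm (z1 - z2) / c" using c by (simp add: le_divide_eq mult.commute)
  thus "norm (inv B z1 - inv B z2) \<le> (1/c) * norm (z1 - z2)" unfolding w1_def w2_def by simp
qed

theorem theorem2p2:
  fixes C :: "'a::{real_inner, complete_space} set"
    and A F :: "'a \<Rightarrow> 'a"
    and L_A L_F lam gam :: real
  assumes "C \<noteq> {}" and "closed C" and "convex C"
    and "lipschitz_on L_A UNIV A" and "lipschitz_on L_F UNIV F"
    and "lam > 0" and "strongly_monotone lam A"
    and "gam > 0" and "couple_strongly_monotone gam A F"
  shows "\<exists>!x. GVI_solution A F C x"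
proof -
  note C = assms(1,2,3)
  have LA: "L_A \<ge> 0" using assms(4) by (rule lipschitz_on_nonneg)
  have LF: "L_F \<ge> 0" using assms(5) by (rule lipschitz_on_nonneg)
  have lipA: "\<And>x y. norm (A x - A y) \<le> L_A * norm (x - y)"
    using assms(4) unfolding lipschitz_on_def dist_norm by blast
  have lipF: "\<And>x y. norm (F x - F y) \<le> L_F * norm (x - y)"
    using assms(5) unfolding lipschitz_on_def dist_norm by blast
  have smA: "\<And>x y. inner (A x - A y) (x - y) \<ge> lam * (norm (x - y))\<^sup>2"
    using assms(7) unfolding strongly_monotone_def by blast
  have cpl: "\<And>x y. inner (A x - A y) (F x - F y) \<ge> gam * (norm (x - y))\<^sup>2"
    using assms(9) unfolding couple_strongly_monotone_def by blast
  note IA = inv_props[OF assms(6) smA lipA LA]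
  define G where "G = (\<lambda>w. F (inv A w))"
  define LG where "LG = L_F * (1/lam)"
  have LG0: "LG \<ge> 0" unfolding LG_def using LF assms(6) by simp
  have lipG: "norm (G w1 - G w2) \<le> LG * norm (w1 - w2)" for w1 w2
  proof -
    have "norm (G w1 - G w2) \<le> L_F * norm (inv A w1 - inv A w2)" unfolding G_def by (rule lipF)
    also have "\<dots> \<le> L_F * ((1/lam) * norm (w1 - w2))" using LF IA(4) by (rule mult_left_mono[rotated])
    finally show ?thesis unfolding LG_def by (simp add: mult.assoc)
  qed
  define c1 where "c1 = gam / (L_A + 1)\<^sup>2"
  have c1: "c1 > 0" unfolding c1_def using assms(8) LA by simp
  have smG: "inner (G w1 - G w2) (w1 - w2) \<ge> c1 * (norm (w1 - w2))\<^sup>2" for w1 w2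
  proof -
    define x1 where "x1 = inv A w1"
    define x2 where "x2 = inv A w2"
    have w1: "w1 = A x1" and w2: "w2 = A x2" unfolding x1_def x2_def using IA(1) by auto
    have "norm (w1 - w2) \<le> L_A * norm (x1 - x2)" unfolding w1 w2 by (rule lipA)
    also have "\<dots> \<le> (L_A+1) * norm (x1 - x2)" by (simp add: distrib_right)
    finally have "c1 * (norm (w1 - w2))\<^sup>2 \<le> gam * (norm (x1 - x2))\<^sup>2"
      unfolding c1_def using LA assms(8) by (intro sq_bound) auto
    also have "\<dots> \<le> inner (A x1 - A x2) (F x1 - F x2)" by (rule cpl)
    also have "\<dots> = inner (G w1 - G w2) (w1 - w2)"
      unfolding G_def x1_def x2_def using IA(1) by (simp add: inner_commute)
    finally show ?thesis .
  qed
  note IG = inv_props[OF c1 smG lipG LG0]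
  obtain z where zC: "z \<in> C" and z: "\<forall>y\<in>C. inner (inv G z) (y - z) \<ge> 0"
    using vi_exists[OF C, of "c1 / (LG + 1)\<^sup>2" "inv G" "1/c1"] IG(3,4) c1 LG0 by auto
  define x where "x = inv A (inv G z)"
  have Fx: "F x = z" using IG(1)[of z] unfolding x_def G_def by simp
  have Ax: "A x = inv G z" unfolding x_def by (rule IA(1))
  have ex: "GVI_solution A F C x" unfolding GVI_solution_def Fx Ax using zC z by blast
  have uniq: "x1 = x2" if s1: "GVI_solution A F C x1" and s2: "GVI_solution A F C x2" for x1 x2
  proof -
    have a1: "inner (A x1) (F x2 - F x1) \<ge> 0" using s1 s2 unfolding GVI_solution_def by blast
    have a2: "inner (A x2) (F x1 - F x2) \<ge> 0" using s1 s2 unfolding GVI_solution_def by blast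
    have "inner (A x1 - A x2) (F x1 - F x2) = - inner (A x1) (F x2 - F x1) - inner (A x2) (F x1 - F x2)"
      by (simp add: inner_diff_left inner_diff_right algebra_simps)
    hence "gam * (norm (x1 - x2))\<^sup>2 \<le> 0" using cpl[of x1 x2] a1 a2 by linarith
    thus ?thesis using assms(8) by (simp add: mult_le_0_iff)
  qed
  show ?thesis using ex uniq by blast
qed

end
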